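(* Let $n\ge2$ and let $\Omega\subset\mathbb R^n$ be a domain. Assume $\alpha\in(-n,0)$ and $\phi$ is a Young function satisfying $\underline\Lambda_\phi(\alpha)<\infty$ and, when $\operatorname{diam}\Omega=\infty$, also $\overline\Lambda_\phi(\alpha)<\infty$. Then $C^1_c(\Omega)\subset\mathbf B^{\alpha,\phi}(\Omega)\subset\dot{\mathbf B}^{\alpha,\phi}(\Omega)$ as sets.
   Context: A Young function is $\phi\in C([0,\infty))$, convex, with $\phi(0)=0$, $\phi(t)>0$ for $t>0$, $\lim_{t\to\infty}\phi(t)=\infty$. $\underline\Lambda_\phi(\alpha):=\sup_{x>0}\int_0^1\frac{\phi(t^{1-\alpha}x)}{\phi(x)}\frac{dt}{t^{n+1}}$, $\overline\Lambda_\phi(\alpha):=\sup_{x>0}\int_1^\infty\frac{\phi(t^{-\alpha}x)}{\phi(x)}\frac{dt}{t^{n+1}}$. $\dot{\mathbf B}^{\alpha,\phi}(\Omega)$ is the space of measurable $u$ on $\Omega$ with finite $\|u\|_{\dot{\mathbf B}^{\alpha,\phi}(\Omega)}:=\inf\{\lambda>0:\int_\Omega\int_\Omega\phi(\frac{|u(x)-u(y)|}{\lambda|x-y|^{\alpha}})\frac{dx\,dy}{|x-y|^{2n}}\le1\}$. $L^\phi(\Omega)$ consists of measurable $u$ with $\|u\|_{L^\phi(\Omega)}:=\inf\{\lambda>0:\int_\Omega\phi(|u|/\lambda)\,dx\le1\}<\infty$, and $\mathbf B^{\alpha,\phi}(\Omega):=L^\phi(\Omega)\cap\dot{\mathbf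 B}^{\alpha,\phi}(\Omega)$. *)

theory Defs
  imports "HOL-Analysis.Analysis"
begin

definition young_function :: "(real \<Rightarrow> real) \<Rightarrow> bool" where
  "young_function \<phi> \<longleftrightarrow>
     continuous_on {0..} \<phi> \<and> convex_on {0..} \<phi> \<and> \<phi> 0 = 0 \<and>
     (\<forall>t>0. \<phi> t > 0) \<and> filterlim \<phi> at_top at_top"

definition Lambda_lower :: "nat \<Rightarrow> (real \<Rightarrow> real) \<Rightarrow> real \<Rightarrow> ennreal" where
  "Lambda_lower n \<phi> \<alpha> =
     (SUP x\<in>{0<..}. \<integral>\<^sup>+ t\<in>{0<..1}.
        ennreal (\<phi> (t powr (1 - \<alpha>) * x) / \<phi> x / t powr (real n + 1)) \<partial>lborel)"

definition Lambda_upper :: "nat \<Rightarrow> (real \<Rightarrow> real) \<Rightarrow> real \<Rightarrow> ennreal" where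
  "Lambda_upper n \<phi> \<alpha> =
     (SUP x\<in>{0<..}. \<integral>\<^sup>+ t\<in>{1..}.
        ennreal (\<phi> (t powr (- \<alpha>) * x) / \<phi> x / t powr (real n + 1)) \<partial>lborel)"

definition besov_modular ::
  "real \<Rightarrow> (real \<Rightarrow> real) \<Rightarrow> ('a::euclidean_space) set \<Rightarrow> ('a \<Rightarrow> real) \<Rightarrow> real \<Rightarrow> ennreal" where
  "besov_modular \<alpha> \<phi> \<Omega> u s =
     (\<integral>\<^sup>+ x\<in>\<Omega>. \<integral>\<^sup>+ y\<in>\<Omega>.
        ennreal (\<phi> (\<bar>u x - u y\<bar> / (s * dist x y powr \<alpha>)) / dist x y ^ (2 * DIM('a)))
      \<partial>lebesgue \<partial>lebesgue)"

definition besov_seminorm ::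
  "real \<Rightarrow> (real \<Rightarrow> real) \<Rightarrow> ('a::euclidean_space) set \<Rightarrow> ('a \<Rightarrow> real) \<Rightarrow> ereal" where
  "besov_seminorm \<alpha> \<phi> \<Omega> u = (INF s\<in>{s. s > 0 \<and> besov_modular \<alpha> \<phi> \<Omega> u s \<le> 1}. ereal s)"

definition dot_besov :: "real \<Rightarrow> (real \<Rightarrow> real) \<Rightarrow> ('a::euclidean_space) set \<Rightarrow> ('a \<Rightarrow> real) set" where
  "dot_besov \<alpha> \<phi> \<Omega> =
     {u. u \<in> borel_measurable (lebesgue_on \<Omega>) \<and> besov_seminorm \<alpha> \<phi> \<Omega> u < \<infinity>}"

definition orlicz_norm :: "(real \<Rightarrow> real) \<Rightarrow> ('a::euclidean_space) set \<Rightarrow> ('a \<Rightarrow> real) \<Rightarrow> ereal" where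
  "orlicz_norm \<phi> \<Omega> u =
     (INF s\<in>{s. s > 0 \<and> (\<integral>\<^sup>+ x\<in>\<Omega>. ennreal (\<phi> (\<bar>u x\<bar> / s)) \<partial>lebesgue) \<le> 1}. ereal s)"

definition orlicz_space :: "(real \<Rightarrow> real) \<Rightarrow> ('a::euclidean_space) set \<Rightarrow> ('a \<Rightarrow> real) set" where
  "orlicz_space \<phi> \<Omega> =
     {u. u \<in> borel_measurable (lebesgue_on \<Omega>) \<and> orlicz_norm \<phi> \<Omega> u < \<infinity>}"

definition besov :: "real \<Rightarrow> (real \<Rightarrow> real) \<Rightarrow> ('a::euclidean_space) set \<Rightarrow> ('a \<Rightarrow> real) set" where
  "besov \<alpha> \<phi> \<Omega> = orlicz_space \<phi> \<Omega> \<inter> dot_besov \<alpha> \<phi> \<Omega>"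

definition C1c :: "('a::euclidean_space) set \<Rightarrow> ('a \<Rightarrow> real) set" where
  "C1c \<Omega> = {u. (\<exists>D :: 'a \<Rightarrow> 'a \<Rightarrow>\<^sub>L real.
                   (\<forall>x\<in>\<Omega>. (u has_derivative blinfun_apply (D x)) (at x)) \<and> continuous_on \<Omega> D) \<and>
               compact (closure {x\<in>\<Omega>. u x \<noteq> 0}) \<and> closure {x\<in>\<Omega>. u x \<noteq> 0} \<subseteq> \<Omega>}"

end

theory Submission
  imports Defs
begin


lemma young_props:
  assumes "young_function \<phi>"
  shows "continuous_on {0..} \<phi>" "convex_on {0..} \<phi>" "\<phi> 0 = 0" "\<And>t. t > 0 \<Longrightarrow> \<phi> t > 0"
  using assms unfolding young_function_def by auto

lemma young_sub:
  assumes "young_function \<phi>" "0 \<le> l" "l \<le> 1" "0 \<le> t"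
  shows "\<phi> (l * t) \<le> l * \<phi> t"
proof -
  have "\<phi> ((1 - l) *\<^sub>R 0 + l *\<^sub>R t) \<le> (1 - l) * \<phi> 0 + l * \<phi> t"
    using convex_onD[OF young_props(2)[OF assms(1)], of l 0 t] assms by auto
  then show ?thesis using young_props(3)[OF assms(1)] by simp
qed

lemma young_nonneg:
  assumes "young_function \<phi>" "0 \<le> t" shows "0 \<le> \<phi> t"
  using young_props(3,4)[OF assms(1)] assms(2) by (cases "t = 0") (auto intro: less_imp_le)

lemma young_mono:
  assumes "young_function \<phi>" "0 \<le> a" "a \<le> b" shows "\<phi> a \<le> \<phi> b"
proof (cases "b = 0")
  case True then show ?thesis using assms by simp
next
  case False
  then have b: "b > 0" using assms by simp
  have "\<phi> ((a/b) * b) \<le> (a/b) * \<phi> b"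
    using young_sub[OF assms(1), of "a/b" b] assms b by auto
  also have "\<dots> \<le> \<phi> b" using young_nonneg[OF assms(1), of b] assms b
      mult_left_le_one_le[of "\<phi> b" "a/b"] by simp
  finally show ?thesis using b by simp
qed

lemma young_scale:
  assumes "young_function \<phi>" "1 \<le> s" "0 \<le> t" shows "\<phi> (t / s) \<le> \<phi> t / s"
  using young_sub[OF assms(1), of "1/s" t] assms by auto

definition phit :: "(real \<Rightarrow> real) \<Rightarrow> real \<Rightarrow> real" where
  "phit \<phi> t = \<phi> (max 0 t)"

lemma phit_cont: assumes "young_function \<phi>" shows "continuous_on UNIV (phit \<phi>)"
proof -
  have "continuous_on UNIV (\<phi> \<circ> (\<lambda>t. max 0 t))"
    by (rule continuous_on_compose) (auto intro!: continuous_intros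
        intro: continuous_on_subset[OF young_props(1)[OF assms]])
  then show ?thesis unfolding phit_def o_def .
qed

lemma phit_meas[measurable]: assumes "young_function \<phi>" shows "phit \<phi> \<in> borel_measurable borel"
  using phit_cont[OF assms] by (intro borel_measurable_continuous_onI) 

lemma emeasure_cball0:
  fixes r :: real assumes "r \<ge> 0"
  shows "emeasure lborel (cball (0::'a::euclidean_space) r) = ennreal (measure lborel (ball (0::'a) 1) * r ^ DIM('a))"
proof -
  have "emeasure lborel (cball (0::'a) r) = ennreal (measure lborel (cball (0::'a) r))"
    using emeasure_lborel_cball_finite[of "0::'a" r] by (simp add: emeasure_eq_ennreal_measure)
  also have "measure lborel (cball (0::'a) r) = measure lborel (ball (0::'a) r)" by (rule content_cball_conv_ball)
  also have "\<dots> = r ^ DIM('a) * measure lborel (ball (0::'a) 1)" using content_ball_conv_unit_ball assms by blast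
  finally show ?thesis by (simp add: mult.commute)
qed

definition rho :: "nat \<Rightarrow> real \<Rightarrow> real \<Rightarrow> real" where
  "rho n w r = (if r > 0 then real n * w * r ^ (n - 1) else 0)"

lemma rho_meas[measurable]: "rho n w \<in> borel_measurable borel"
  unfolding rho_def by measurable

lemma rho_integral_Ioc:
  fixes a b w :: real and n :: nat
  assumes "a < b" "0 \<le> b" "n \<ge> 1" "w \<ge> 0"
  shows "(\<integral>\<^sup>+r. ennreal (rho n w r) * indicator {a<..b} r \<partial>lborel)
     = ennreal (w * b ^ n - w * (max a 0) ^ n)"
proof -
  define c where "c = max a 0"
  have "(\<integral>\<^sup>+r. ennreal (rho n w r) * indicator {a<..b} r \<partial>lborel)
      = (\<integral>\<^sup>+r. ennreal (real n * w * r ^ (n - 1)) * indicator {c..b} r \<partial>lborel)"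
  proof (rule nn_integral_cong_AE)
    show "AE r in lborel. ennreal (rho n w r) * indicator {a<..b} r =
         ennreal (real n * w * r ^ (n - 1)) * indicator {c..b} r"
      using AE_lborel_singleton[of c]
    proof eventually_elim
      case (elim r)
      show ?case
      proof (cases "r > 0")
        case True
        then have "(r \<in> {a<..b}) = (r \<in> {c..b})" using elim by (auto simp: c_def)
        then show ?thesis using True by (simp add: rho_def indicator_def)
      next
        case False
        then have "r \<notin> {c..b}" using elim by (auto simp: c_def)
        then show ?thesis using False by (simp add: rho_def indicator_def)
      qed
    qed
  qed
  also have "\<dots> = ennreal (w * b ^ n - w * c ^ n)"
  proof (rule nn_integral_FTC_Icc)
    show "(\<lambda>r. real n * w * r ^ (n - 1)) \<in> borel_measurable borel" by measurable
    show "c \<le> b" using assms by (simp add: c_def)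
    fix x assume x: "x \<in> {c..b}"
    then have "x \<ge> 0" by (auto simp: c_def)
    then show "0 \<le> real n * w * x ^ (n - 1)" using assms by simp
    show "((\<lambda>r. w * r ^ n) has_real_derivative real n * w * x ^ (n - 1)) (at x)"
      by (auto intro!: derivative_eq_intros)
  qed
  finally show ?thesis by (simp add: c_def)
qed

lemma emeasure_distr_norm_Ioc:
  fixes a b :: real
  defines "w \<equiv> measure lborel (ball (0::'a::euclidean_space) 1)"
  shows "emeasure (distr (lborel::'a measure) borel norm) {a<..b}
       = emeasure (density lborel (\<lambda>r. ennreal (rho DIM('a) w r))) {a<..b}"
proof -
  have w0: "w \<ge> 0" unfolding w_def by simp
  have L: "emeasure (distr (lborel::'a measure) borel norm) {a<..b} = emeasure lborel {z::'a. a < norm z \<and> norm z \<le> b}"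
    by (subst emeasure_distr) (auto intro!: arg_cong[where f="emeasure lborel"])
  have R: "emeasure (density lborel (\<lambda>r. ennreal (rho DIM('a) w r))) {a<..b}
      = (\<integral>\<^sup>+r. ennreal (rho DIM('a) w r) * indicator {a<..b} r \<partial>lborel)"
    by (subst emeasure_density) auto
  show ?thesis
  proof (cases "b < 0 \<or> b \<le> a")
    case True
    then have E: "{z::'a. a < norm z \<and> norm z \<le> b} = {}" 
      by auto (smt (verit) norm_ge_zero)
    moreover have Z: "(\<integral>\<^sup>+r. ennreal (rho DIM('a) w r) * indicator {a<..b} r \<partial>lborel) = (\<integral>\<^sup>+r. 0 \<partial>(lborel::real measure))"
      by (intro nn_integral_cong) (use True in \<open>auto simp: rho_def indicator_def\<close>)
    show ?thesis unfolding L R E Z by simp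
  next
    case False
    then have ab: "a < b" "0 \<le> b" by auto
    have I: "(\<integral>\<^sup>+r. ennreal (rho DIM('a) w r) * indicator {a<..b} r \<partial>lborel)
       = ennreal (w * b ^ DIM('a) - w * (max a 0) ^ DIM('a))"
      by (rule rho_integral_Ioc) (use ab w0 in auto)
    show ?thesis
    proof (cases "a < 0")
      case True
      then have "{z::'a. a < norm z \<and> norm z \<le> b} = cball 0 b" by (auto simp: dist_norm) (meson less_le_trans norm_ge_zero)
      then show ?thesis using L R I True emeasure_cball0[OF ab(2), where 'a='a]
        by (simp add: w_def mult.commute power_0_left)
    next
      case False
      then have "{z::'a. a < norm z \<and> norm z \<le> b} = cball 0 b - cball 0 a" by (auto simp: dist_norm)
      moreover have "emeasure lborel (cball (0::'a) b - cball 0 a) = emeasure lborel (cball (0::'a) b) - emeasure lborel (cball (0::'a) a)"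
        using ab by (intro emeasure_Diff) (use emeasure_lborel_cball_finite[of "0::'a" a] in auto)
      ultimately show ?thesis using L R I False emeasure_cball0[OF ab(2), where 'a='a] emeasure_cball0[of a, where 'a='a]
        by (simp add: w_def mult.commute ennreal_minus)
    qed
  qed
qed

lemma distr_norm_eq:
  defines "w \<equiv> measure lborel (ball (0::'a::euclidean_space) 1)"
  shows "distr (lborel::'a measure) borel norm = density lborel (\<lambda>r. ennreal (rho DIM('a) w r))"
proof (rule measure_eqI_generator_eq[where \<Omega>=UNIV and E="range (\<lambda>(a,b). {a<..b::real})"
      and A="\<lambda>i. {-real i<..real i}"])
  show "Int_stable (range (\<lambda>(a, b). {a<..b::real}))"
    unfolding Int_stable_def
  proof (intro ballI)
    fix A B assume "A \<in> range (\<lambda>(a, b). {a<..b::real})" "B \<in> range (\<lambda>(a, b). {a<..b::real})"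
    then obtain a b c d where "A = {a<..b}" "B = {c<..d}" by auto
    then have "A \<inter> B = {max a c<..min b d}" by auto
    then show "A \<inter> B \<in> range (\<lambda>(a, b). {a<..b::real})"
      by (auto intro!: image_eqI[where x="(max a c, min b d)"])
  qed
  show "range (\<lambda>(a, b). {a<..b::real}) \<subseteq> Pow UNIV" by auto
  fix X assume "X \<in> range (\<lambda>(a, b). {a<..b::real})"
  then obtain a b where X: "X = {a<..b}" by auto
  show "emeasure (distr (lborel::'a measure) borel norm) X = emeasure (density lborel (\<lambda>r. ennreal (rho DIM('a) w r))) X"
    unfolding X w_def by (rule emeasure_distr_norm_Ioc)
next
  have S: "sets borel = sigma_sets UNIV (range (\<lambda>(a, b). {a<..b::real}))"
    by (subst borel_sigma_sets_Ioc) (simp add: sets_measure_of)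
  show "sets (distr (lborel::'a measure) borel norm) = sigma_sets UNIV (range (\<lambda>(a, b). {a<..b::real}))"
    using S by simp
  show "sets (density lborel (\<lambda>r. ennreal (rho DIM('a) w r))) = sigma_sets UNIV (range (\<lambda>(a, b). {a<..b::real}))"
    using S by simp
  show "range (\<lambda>i. {- real i<..real i}) \<subseteq> range (\<lambda>(a, b). {a<..b::real})" by auto
  show "(\<Union>i. {- real i<..real i}) = UNIV"
  proof safe
    fix x :: real
    obtain i :: nat where "\<bar>x\<bar> < real i" using reals_Archimedean2 by blast
    then have "x \<in> {- real i<..real i}" by auto
    then show "x \<in> (\<Union>i. {- real i<..real i})" by blast
  qed auto
  fix i :: nat
  have "emeasure (distr (lborel::'a measure) borel norm) {- real i<..real i}
      = emeasure lborel {z::'a. - real i < norm z \<and> norm z \<le> real i}"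
    by (subst emeasure_distr) (auto intro!: arg_cong[where f="emeasure lborel"])
  also have "\<dots> \<le> emeasure lborel (cball (0::'a) (real i))"
    by (rule emeasure_mono) (auto simp: dist_norm)
  finally show "emeasure (distr (lborel::'a measure) borel norm) {- real i<..real i} \<noteq> \<infinity>"
    using emeasure_lborel_cball_finite[of "0::'a" "real i"] by (simp add: top_unique)
qed

lemma polar_nn:
  fixes G :: "real \<Rightarrow> ennreal"
  assumes [measurable]: "G \<in> borel_measurable borel"
  shows "(\<integral>\<^sup>+z. G (norm z) \<partial>(lborel::'a::euclidean_space measure))
       = (\<integral>\<^sup>+r. ennreal (rho DIM('a) (measure lborel (ball (0::'a) 1)) r) * G r \<partial>lborel)"
proof -
  have "(\<integral>\<^sup>+z. G (norm z) \<partial>(lborel::'a measure)) = (\<integral>\<^sup>+r. G r \<partial>distr (lborel::'a measure) borel norm)"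
    by (subst nn_integral_distr) auto
  also have "\<dots> = (\<integral>\<^sup>+r. G r \<partial>density lborel (\<lambda>r. ennreal (rho DIM('a) (measure lborel (ball (0::'a) 1)) r)))"
    by (subst distr_norm_eq) simp
  also have "\<dots> = (\<integral>\<^sup>+r. ennreal (rho DIM('a) (measure lborel (ball (0::'a) 1)) r) * G r \<partial>lborel)"
    by (subst nn_integral_density) auto
  finally show ?thesis .
qed


definition prof :: "(real \<Rightarrow> real) \<Rightarrow> real \<Rightarrow> nat \<Rightarrow> real \<Rightarrow> real \<Rightarrow> bool \<Rightarrow> real \<Rightarrow> real \<Rightarrow> real" where
  "prof \<phi> \<alpha> n L M bd D r = (if r \<le> 1 then phit \<phi> (L * r powr (1 - \<alpha>))
      else phit \<phi> (M * r powr (- \<alpha>)) * (if bd \<and> r > D then 0 else 1)) / r ^ (2 * n)"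

lemma prof_meas[measurable]: assumes "young_function \<phi>"
  shows "prof \<phi> \<alpha> n L M bd D \<in> borel_measurable borel"
  unfolding prof_def using phit_meas[OF assms] by measurable

lemma phit_nonneg: "young_function \<phi> \<Longrightarrow> 0 \<le> phit \<phi> x"
  unfolding phit_def by (rule young_nonneg) auto

lemma phit_eq: "0 \<le> x \<Longrightarrow> phit \<phi> x = \<phi> x" by (simp add: phit_def)

lemma lower_le:
  assumes "L > 0"
  shows "(\<integral>\<^sup>+ t\<in>{0<..1}. ennreal (\<phi> (t powr (1 - \<alpha>) * L) / \<phi> L / t powr (real n + 1)) \<partial>lborel)
     \<le> Lambda_lower n \<phi> \<alpha>"
  unfolding Lambda_lower_def by (rule SUP_upper) (use assms in auto)

lemma upper_le:
  assumes "L > 0"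
  shows "(\<integral>\<^sup>+ t\<in>{1..}. ennreal (\<phi> (t powr (- \<alpha>) * L) / \<phi> L / t powr (real n + 1)) \<partial>lborel)
     \<le> Lambda_upper n \<phi> \<alpha>"
  unfolding Lambda_upper_def by (rule SUP_upper) (use assms in auto)

lemma pow_aux:
  fixes t :: real assumes "t > 0" "n \<ge> 1"
  shows "t ^ (n - 1) / t ^ (2 * n) = 1 / t powr (real n + 1)"
proof -
  have "t powr (real n + 1) = t powr (real (n + 1))" by (simp add: add.commute)
  also have "\<dots> = t ^ (n + 1)" by (rule powr_realpow) (use assms in auto)
  finally have "t powr (real n + 1) = t ^ (n + 1)" .
  moreover have "t ^ (2 * n) = t ^ (n - 1) * t ^ (n + 1)"
  proof -
    have "2 * n = (n - 1) + (n + 1)" using assms by simp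
    then show ?thesis by (metis power_add)
  qed
  ultimately show ?thesis using assms by (simp add: field_simps)
qed

lemma near_finite:
  assumes Y: "young_function \<phi>" and "n \<ge> 1" "w \<ge> 0" "L > 0" and Ll: "Lambda_lower n \<phi> \<alpha> < \<infinity>"
  shows "(\<integral>\<^sup>+r. ennreal (rho n w r * prof \<phi> \<alpha> n L M bd D r) * indicator {0<..1} r \<partial>lborel) < \<infinity>"
proof -
  have pL: "\<phi> L > 0" using young_props(4)[OF Y] assms by auto
  define c where "c = real n * w * \<phi> L"
  have "(\<integral>\<^sup>+r. ennreal (rho n w r * prof \<phi> \<alpha> n L M bd D r) * indicator {0<..1} r \<partial>lborel)
      = (\<integral>\<^sup>+r. ennreal c * (ennreal (phit \<phi> (r powr (1 - \<alpha>) * L) / \<phi> L / r powr (real n + 1)) * indicator {0<..1} r) \<partial>lborel)"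
  proof (rule nn_integral_cong)
    fix r :: real
    show "ennreal (rho n w r * prof \<phi> \<alpha> n L M bd D r) * indicator {0<..1} r =
         ennreal c * (ennreal (phit \<phi> (r powr (1 - \<alpha>) * L) / \<phi> L / r powr (real n + 1)) * indicator {0<..1} r)"
    proof (cases "r \<in> {0<..1}")
      case True
      then have r: "r > 0" "r \<le> 1" by auto
      have eq: "rho n w r * prof \<phi> \<alpha> n L M bd D r = c * (phit \<phi> (r powr (1 - \<alpha>) * L) / \<phi> L / r powr (real n + 1))"
        using r pL pow_aux[OF r(1) assms(2)]
        by (simp add: rho_def prof_def c_def mult.commute) (simp add: field_simps)
      moreover have "c \<ge> 0" unfolding c_def using assms pL by simp
      moreover have "phit \<phi> (r powr (1 - \<alpha>) * L) / \<phi> L / r powr (real n + 1) \<ge> 0"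
        using phit_nonneg[OF Y] pL r by simp
      ultimately have "ennreal (rho n w r * prof \<phi> \<alpha> n L M bd D r) = ennreal c *
         ennreal (phit \<phi> (r powr (1 - \<alpha>) * L) / \<phi> L / r powr (real n + 1))"
        unfolding eq by (intro ennreal_mult)
      then show ?thesis using True by simp
    qed simp
  qed
  also have "\<dots> = ennreal c * (\<integral>\<^sup>+r. ennreal (phit \<phi> (r powr (1 - \<alpha>) * L) / \<phi> L / r powr (real n + 1)) * indicator {0<..1} r \<partial>lborel)"
    by (rule nn_integral_cmult) (use phit_meas[OF Y] in measurable)
  also have "(\<integral>\<^sup>+r. ennreal (phit \<phi> (r powr (1 - \<alpha>) * L) / \<phi> L / r powr (real n + 1)) * indicator {0<..1} r \<partial>lborel)
     = (\<integral>\<^sup>+ t\<in>{0<..1}. ennreal (\<phi> (t powr (1 - \<alpha>) * L) / \<phi> L / t powr (real n + 1)) \<partial>lborel)"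
    using assms by (intro nn_integral_cong) (simp add: phit_eq)
  also have "\<dots> \<le> Lambda_lower n \<phi> \<alpha>" by (rule lower_le) fact
  finally have "(\<integral>\<^sup>+r. ennreal (rho n w r * prof \<phi> \<alpha> n L M bd D r) * indicator {0<..1} r \<partial>lborel)
     \<le> ennreal c * Lambda_lower n \<phi> \<alpha>" by (simp add: mult_left_mono)
  also have "\<dots> < \<infinity>" using Ll by (simp add: ennreal_mult_less_top)
  finally show ?thesis .
qed


lemma far_unb:
  assumes Y: "young_function \<phi>" and "n \<ge> 1" "w \<ge> 0" "M > 0" "\<alpha> < 0" and Lu: "Lambda_upper n \<phi> \<alpha> < \<infinity>"
  shows "(\<integral>\<^sup>+r. ennreal (rho n w r * prof \<phi> \<alpha> n L M bd D r) * indicator {1<..} r \<partial>lborel) < \<infinity>"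
proof -
  have pM: "\<phi> M > 0" using young_props(4)[OF Y] assms by auto
  define c where "c = real n * w * \<phi> M"
  have c0: "c \<ge> 0" unfolding c_def using assms pM by simp
  have "(\<integral>\<^sup>+r. ennreal (rho n w r * prof \<phi> \<alpha> n L M bd D r) * indicator {1<..} r \<partial>lborel)
      \<le> (\<integral>\<^sup>+r. ennreal c * (ennreal (phit \<phi> (r powr (- \<alpha>) * M) / \<phi> M / r powr (real n + 1)) * indicator {1..} r) \<partial>lborel)"
  proof (rule nn_integral_mono)
    fix r :: real
    show "ennreal (rho n w r * prof \<phi> \<alpha> n L M bd D r) * indicator {1<..} r \<le>
         ennreal c * (ennreal (phit \<phi> (r powr (- \<alpha>) * M) / \<phi> M / r powr (real n + 1)) * indicator {1..} r)"
    proof (cases "r \<in> {1<..}")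
      case True
      then have r: "r > 1" by auto
      have q0: "phit \<phi> (r powr (- \<alpha>) * M) / \<phi> M / r powr (real n + 1) \<ge> 0"
        using phit_nonneg[OF Y] pM r by simp
      have "rho n w r * prof \<phi> \<alpha> n L M bd D r \<le> real n * w * r ^ (n - 1) * (phit \<phi> (M * r powr (- \<alpha>)) / r ^ (2 * n))"
        using r assms phit_nonneg[OF Y, of "M * r powr (- \<alpha>)"]
        by (auto simp: rho_def prof_def divide_le_cancel intro!: mult_left_mono)
      also have "\<dots> = c * (phit \<phi> (r powr (- \<alpha>) * M) / \<phi> M / r powr (real n + 1))"
        using r pM pow_aux[of r n] assms by (simp add: c_def mult.commute) (simp add: field_simps)
      finally have "ennreal (rho n w r * prof \<phi> \<alpha> n L M bd D r) \<le> ennreal c *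
         ennreal (phit \<phi> (r powr (- \<alpha>) * M) / \<phi> M / r powr (real n + 1))"
        using c0 q0 by (simp add: ennreal_mult[symmetric] ennreal_leI)
      then show ?thesis using True by simp
    qed simp
  qed
  also have "\<dots> = ennreal c * (\<integral>\<^sup>+r. ennreal (phit \<phi> (r powr (- \<alpha>) * M) / \<phi> M / r powr (real n + 1)) * indicator {1..} r \<partial>lborel)"
    by (rule nn_integral_cmult) (use phit_meas[OF Y] in measurable)
  also have "(\<integral>\<^sup>+r. ennreal (phit \<phi> (r powr (- \<alpha>) * M) / \<phi> M / r powr (real n + 1)) * indicator {1..} r \<partial>lborel)
     = (\<integral>\<^sup>+ t\<in>{1..}. ennreal (\<phi> (t powr (- \<alpha>) * M) / \<phi> M / t powr (real n + 1)) \<partial>lborel)"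
    using assms by (intro nn_integral_cong) (simp add: phit_eq)
  also have "\<dots> \<le> Lambda_upper n \<phi> \<alpha>" by (rule upper_le) fact
  finally have "(\<integral>\<^sup>+r. ennreal (rho n w r * prof \<phi> \<alpha> n L M bd D r) * indicator {1<..} r \<partial>lborel)
     \<le> ennreal c * Lambda_upper n \<phi> \<alpha>" by (simp add: mult_left_mono)
  also have "\<dots> < \<infinity>" using Lu by (simp add: ennreal_mult_less_top)
  finally show ?thesis .
qed

lemma far_bd:
  assumes Y: "young_function \<phi>" and "n \<ge> 1" "w \<ge> 0" "M > 0" "\<alpha> < 0"
  shows "(\<integral>\<^sup>+r. ennreal (rho n w r * prof \<phi> \<alpha> n L M True D r) * indicator {1<..} r \<partial>lborel) < \<infinity>"
proof -
  define c where "c = real n * w * phit \<phi> (M * D powr (- \<alpha>))"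
  have c0: "c \<ge> 0" unfolding c_def using assms phit_nonneg[OF Y] by simp
  have "(\<integral>\<^sup>+r. ennreal (rho n w r * prof \<phi> \<alpha> n L M True D r) * indicator {1<..} r \<partial>lborel)
      \<le> (\<integral>\<^sup>+r. ennreal c * indicator {1..D} r \<partial>lborel)"
  proof (rule nn_integral_mono)
    fix r :: real
    show "ennreal (rho n w r * prof \<phi> \<alpha> n L M True D r) * indicator {1<..} r \<le> ennreal c * indicator {1..D} r"
    proof (cases "r \<in> {1<..D}")
      case True
      then have r: "r > 1" "r \<le> D" by auto
      have "phit \<phi> (M * r powr (- \<alpha>)) \<le> phit \<phi> (M * D powr (- \<alpha>))"
        unfolding phit_def using r assms
        by (intro young_mono[OF Y]) (auto intro!: mult_left_mono powr_mono2)
      moreover have "r ^ (n - 1) \<le> r ^ (2 * n)" using r by (intro power_increasing) auto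
      moreover have "r ^ (2 * n) > 0" using r by simp
      ultimately have "r ^ (n - 1) * phit \<phi> (M * r powr (- \<alpha>)) / r ^ (2 * n) \<le> phit \<phi> (M * D powr (- \<alpha>))"
        using phit_nonneg[OF Y, of "M * r powr (- \<alpha>)"] phit_nonneg[OF Y, of "M * D powr (- \<alpha>)"]
        by (simp add: divide_le_eq) (metis mult.commute mult_mono' zero_le_power less_imp_le r(1) order.trans zero_le_one)
      then have "rho n w r * prof \<phi> \<alpha> n L M True D r \<le> c"
        using r assms unfolding rho_def prof_def c_def
        by (simp add: mult.assoc) (metis (no_types, lifting) mult_left_mono of_nat_0_le_iff times_divide_eq_right mult_nonneg_nonneg)
      then show ?thesis using True by (simp add: ennreal_leI)
    next
      case False
      then have "r \<in> {1<..} \<Longrightarrow> r > D" by auto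
      then show ?thesis by (auto simp: prof_def indicator_def)
    qed
  qed
  also have "\<dots> = ennreal c * emeasure lborel {1..D}" by (rule nn_integral_cmult_indicator) simp
  also have "\<dots> < \<infinity>" by (simp add: ennreal_mult_less_top emeasure_lborel_Icc_eq)
  finally show ?thesis .
qed

lemma c1c_ext:
  fixes u :: "'a::euclidean_space \<Rightarrow> real"
  assumes u: "u \<in> C1c \<Omega>" and op: "open \<Omega>"
  defines "K \<equiv> closure {x\<in>\<Omega>. u x \<noteq> 0}" and "v \<equiv> \<lambda>x. if x \<in> \<Omega> then u x else 0"
  shows "compact K" "K \<subseteq> \<Omega>" "\<And>x. x \<notin> K \<Longrightarrow> v x = 0"
    "\<exists>L>0. \<forall>x y. \<bar>v x - v y\<bar> \<le> L * dist x y" "\<exists>M>0. \<forall>x. \<bar>v x\<bar> \<le> M" "continuous_on \<Omega> u"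
proof -
  obtain D :: "'a \<Rightarrow> 'a \<Rightarrow>\<^sub>L real" where
    D: "\<And>x. x \<in> \<Omega> \<Longrightarrow> (u has_derivative blinfun_apply (D x)) (at x)" and Dc: "continuous_on \<Omega> D"
    and cK: "compact K" and KO: "K \<subseteq> \<Omega>"
    using u unfolding C1c_def K_def by blast
  show "compact K" "K \<subseteq> \<Omega>" by fact+
  show v0: "\<And>x. x \<notin> K \<Longrightarrow> v x = 0"
    unfolding v_def K_def using closure_subset[of "{x\<in>\<Omega>. u x \<noteq> 0}"] by auto
  show cu: "continuous_on \<Omega> u"
    by (intro continuous_at_imp_continuous_on ballI has_derivative_continuous) (use D in blast)
  have cvK: "continuous_on K v"
    by (rule continuous_on_eq[OF continuous_on_subset[OF cu KO]]) (use KO in \<open>auto simp: v_def\<close>)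
  obtain B where B: "\<And>x. x \<in> K \<Longrightarrow> norm (D x) \<le> B"
    using compact_imp_bounded[OF compact_continuous_image[OF continuous_on_subset[OF Dc KO] cK]]
    unfolding bounded_iff by auto
  define D' where "D' = (\<lambda>x. if x \<in> K then blinfun_apply (D x) else (\<lambda>_. 0))"
  have der: "(v has_derivative D' x) (at x within UNIV)" for x
  proof (cases "x \<in> K")
    case True
    then have "x \<in> \<Omega>" using KO by auto
    have "(v has_derivative blinfun_apply (D x)) (at x)"
      by (rule has_derivative_transform_within_open[OF D[OF \<open>x \<in> \<Omega>\<close>] op \<open>x \<in> \<Omega>\<close>]) (simp add: v_def)
    moreover have "D' x = blinfun_apply (D x)" using True by (simp add: D'_def)
    ultimately show ?thesis by simp
  next
    case False
    have "((\<lambda>_. 0) has_derivative (\<lambda>_. 0)) (at x within UNIV)" by (rule has_derivative_const)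
    moreover have "D' x = (\<lambda>_. 0)" using False by (simp add: D'_def)
    moreover have "open (- K)" using cK compact_imp_closed by blast
    ultimately show ?thesis
      using has_derivative_transform_within_open[of "\<lambda>_. 0" "\<lambda>_. 0" x UNIV "- K" v] False v0 by auto
  qed
  have onB: "onorm (D' x) \<le> max B 0" for x
    unfolding D'_def using B[of x] by (auto simp: norm_blinfun.rep_eq[symmetric] onorm_zero intro: le_max_iff_disj[THEN iffD2])
  show "\<exists>L>0. \<forall>x y. \<bar>v x - v y\<bar> \<le> L * dist x y"
  proof (intro exI[of _ "max B 0 + 1"] conjI allI)
    fix x y
    have "norm (v x - v y) \<le> max B 0 * norm (x - y)"
      by (rule differentiable_bound[of UNIV]) (use der onB in auto)
    also have "\<dots> \<le> (max B 0 + 1) * norm (x - y)" by (simp add: mult_right_mono)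
    finally show "\<bar>v x - v y\<bar> \<le> (max B 0 + 1) * dist x y" by (simp add: dist_norm)
  qed simp
  obtain C where C: "\<And>x. x \<in> K \<Longrightarrow> norm (v x) \<le> C"
    using compact_imp_bounded[OF compact_continuous_image[OF cvK cK]] unfolding bounded_iff by auto
  show "\<exists>M>0. \<forall>x. \<bar>v x\<bar> \<le> M"
  proof (intro exI[of _ "max C 0 + 1"] conjI allI)
    fix x show "\<bar>v x\<bar> \<le> max C 0 + 1"
      using C[of x] v0[of x] by (cases "x \<in> K") auto
  qed simp
qed


lemma prof_nonneg: "young_function \<phi> \<Longrightarrow> 0 \<le> prof \<phi> \<alpha> n L M bd D r"
  by (auto simp: prof_def phit_nonneg power_mult intro!: divide_nonneg_nonneg)

lemma pt_bound:
  assumes Y: "young_function \<phi>" and "\<alpha> < 0" "s \<ge> 1" "L > 0" "M > 0"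
    and lip: "\<bar>a - b\<bar> \<le> L * d" and bnd: "\<bar>a\<bar> \<le> M" "\<bar>b\<bar> \<le> M" and d0: "d \<ge> 0"
    and cut: "bd \<Longrightarrow> d \<le> Dm"
  shows "\<phi> (\<bar>a - b\<bar> / (s * d powr \<alpha>)) / d ^ (2 * n) \<le> (1 / s) * prof \<phi> \<alpha> n L (2 * M) bd Dm d"
proof (cases "d = 0")
  case True
  then show ?thesis using prof_nonneg[OF Y] young_props(3)[OF Y] assms by simp
next
  case False
  then have d: "d > 0" using d0 by simp
  define t where "t = \<bar>a - b\<bar> / d powr \<alpha>"
  have t0: "t \<ge> 0" unfolding t_def by simp
  have "\<bar>a - b\<bar> / (s * d powr \<alpha>) = t / s" unfolding t_def by simp
  then have 1: "\<phi> (\<bar>a - b\<bar> / (s * d powr \<alpha>)) \<le> \<phi> t / s" using young_scale[OF Y assms(3) t0] by simp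
  define T where "T = (if d \<le> 1 then L * d powr (1 - \<alpha>) else 2 * M * d powr (- \<alpha>))"
  have tT: "t \<le> T"
  proof (cases "d \<le> 1")
    case True
    have "t \<le> L * d / d powr \<alpha>" unfolding t_def using lip d by (simp add: divide_right_mono)
    also have "\<dots> = L * d powr (1 - \<alpha>)" using d by (simp add: powr_diff)
    finally show ?thesis using True by (simp add: T_def)
  next
    case False
    have "\<bar>a - b\<bar> \<le> 2 * M" using bnd by simp
    then have "t \<le> 2 * M / d powr \<alpha>" unfolding t_def using d by (simp add: divide_right_mono)
    also have "\<dots> = 2 * M * d powr (- \<alpha>)" using d by (simp add: powr_minus divide_inverse)
    finally show ?thesis using False by (simp add: T_def)
  qed
  have 2: "\<phi> t \<le> phit \<phi> T" unfolding phit_def using tT t0 by (intro young_mono[OF Y]) auto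
  have cut1: "(if bd \<and> d > Dm then 0 else 1) = (1::real)" using cut by auto
  have P: "prof \<phi> \<alpha> n L (2 * M) bd Dm d = phit \<phi> T / d ^ (2 * n)"
    unfolding prof_def T_def using cut1 by (simp add: mult.commute)
  have "\<phi> (\<bar>a - b\<bar> / (s * d powr \<alpha>)) / d ^ (2 * n) \<le> (phit \<phi> T / s) / d ^ (2 * n)"
  proof (rule divide_right_mono)
    have "\<phi> t / s \<le> phit \<phi> T / s" using 2 assms(3) by (simp add: divide_right_mono)
    then show "\<phi> (\<bar>a - b\<bar> / (s * d powr \<alpha>)) \<le> phit \<phi> T / s" using 1 by linarith
  qed (use d in simp)
  also have "\<dots> = (1 / s) * prof \<phi> \<alpha> n L (2 * M) bd Dm d" unfolding P by simp
  finally show ?thesis .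
qed




lemma radial_finite:
  assumes Y: "young_function \<phi>" and "n \<ge> 1" "w \<ge> 0" "L > 0" "M > 0" "\<alpha> < 0"
    and Ll: "Lambda_lower n \<phi> \<alpha> < \<infinity>" and bdU: "bd \<or> Lambda_upper n \<phi> \<alpha> < \<infinity>"
  shows "(\<integral>\<^sup>+r. ennreal (rho n w r) * ennreal (prof \<phi> \<alpha> n L M bd D r) \<partial>lborel) < \<infinity>"
proof -
  have [measurable]: "prof \<phi> \<alpha> n L M bd D \<in> borel_measurable borel" by (rule prof_meas[OF Y])
  have "(\<integral>\<^sup>+r. ennreal (rho n w r) * ennreal (prof \<phi> \<alpha> n L M bd D r) \<partial>lborel)
     = (\<integral>\<^sup>+r. ennreal (rho n w r * prof \<phi> \<alpha> n L M bd D r) * indicator {0<..1} r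
            + ennreal (rho n w r * prof \<phi> \<alpha> n L M bd D r) * indicator {1<..} r \<partial>lborel)"
  proof (rule nn_integral_cong)
    fix r :: real
    have "rho n w r \<ge> 0" using assms by (simp add: rho_def)
    then have e: "ennreal (rho n w r) * ennreal (prof \<phi> \<alpha> n L M bd D r) = ennreal (rho n w r * prof \<phi> \<alpha> n L M bd D r)"
      using prof_nonneg[OF Y] by (simp add: ennreal_mult)
    show "ennreal (rho n w r) * ennreal (prof \<phi> \<alpha> n L M bd D r) =
          ennreal (rho n w r * prof \<phi> \<alpha> n L M bd D r) * indicator {0<..1} r
            + ennreal (rho n w r * prof \<phi> \<alpha> n L M bd D r) * indicator {1<..} r"
      unfolding e by (cases "r \<le> 0"; cases "r \<le> 1") (auto simp: rho_def indicator_def)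
  qed
  also have "\<dots> = (\<integral>\<^sup>+r. ennreal (rho n w r * prof \<phi> \<alpha> n L M bd D r) * indicator {0<..1} r \<partial>lborel)
     + (\<integral>\<^sup>+r. ennreal (rho n w r * prof \<phi> \<alpha> n L M bd D r) * indicator {1<..} r \<partial>lborel)"
    by (rule nn_integral_add) measurable
  also have "\<dots> < \<infinity>"
  proof -
    have n1: "(\<integral>\<^sup>+r. ennreal (rho n w r * prof \<phi> \<alpha> n L M bd D r) * indicator {0<..1} r \<partial>lborel) < \<infinity>"
      by (rule near_finite) (use assms in auto)
    have n2: "(\<integral>\<^sup>+r. ennreal (rho n w r * prof \<phi> \<alpha> n L M bd D r) * indicator {1<..} r \<partial>lborel) < \<infinity>"
    proof (cases bd)
      case True
      then show ?thesis using far_bd[OF Y assms(2,3,5,6), of L D] by simp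
    next
      case False
      then show ?thesis using far_unb[OF Y assms(2,3,5,6)] bdU by simp
    qed
    show ?thesis using n1 n2 by simp
  qed
  finally show ?thesis .
qed

lemma nn_integral_shift:
  fixes f :: "'a::euclidean_space \<Rightarrow> ennreal"
  assumes [measurable]: "f \<in> borel_measurable borel"
  shows "(\<integral>\<^sup>+y. f (y - x) \<partial>lborel) = (\<integral>\<^sup>+z. f z \<partial>lborel)"
proof -
  have "(\<integral>\<^sup>+z. f z \<partial>lborel) = (\<integral>\<^sup>+z. f z \<partial>distr lborel borel ((+) (- x)))"
    by (simp add: lborel_distr_plus)
  also have "\<dots> = (\<integral>\<^sup>+y. f (- x + y) \<partial>lborel)" by (subst nn_integral_distr) auto
  finally show ?thesis by simp
qed


lemma besov_part:
  fixes u :: "'a::euclidean_space \<Rightarrow> real"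
  assumes Y: "young_function \<phi>" and al: "\<alpha> < 0" and op: "open \<Omega>" and u: "u \<in> C1c \<Omega>"
    and Ll: "Lambda_lower DIM('a) \<phi> \<alpha> < \<infinity>" and Lu: "\<not> bounded \<Omega> \<Longrightarrow> Lambda_upper DIM('a) \<phi> \<alpha> < \<infinity>"
  shows "\<exists>s>0. besov_modular \<alpha> \<phi> \<Omega> u s \<le> 1"
proof -
  define K where "K = closure {x\<in>\<Omega>. u x \<noteq> 0}"
  note ext = c1c_ext[OF u op]
  have cK: "compact K" and KO: "K \<subseteq> \<Omega>" using ext(1,2) unfolding K_def by auto
  have uK: "\<And>x. x \<in> \<Omega> \<Longrightarrow> x \<notin> K \<Longrightarrow> u x = 0" using ext(3) unfolding K_def by force
  obtain L where L0: "L > 0" and Lx: "\<forall>x y. \<bar>(if x \<in> \<Omega> then u x else 0) - (if y \<in> \<Omega> then u y else 0)\<bar> \<le> L * dist x y"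
    using ext(4) by blast
  have lip: "\<And>x y. x \<in> \<Omega> \<Longrightarrow> y \<in> \<Omega> \<Longrightarrow> \<bar>u x - u y\<bar> \<le> L * dist x y"
    using Lx by (metis (full_types))
  obtain M where M0: "M > 0" and Mx: "\<forall>x. \<bar>if x \<in> \<Omega> then u x else 0\<bar> \<le> M"
    using ext(5) by blast
  have bnd: "\<And>x. x \<in> \<Omega> \<Longrightarrow> \<bar>u x\<bar> \<le> M" using Mx by (metis (full_types))
  define n where "n = DIM('a)"
  define P where "P = prof \<phi> \<alpha> n L (2 * M) (bounded \<Omega>) (diameter \<Omega>)"
  have Pm[measurable]: "P \<in> borel_measurable borel" unfolding P_def by (rule prof_meas[OF Y])
  have Km[measurable]: "K \<in> sets borel" using compact_imp_closed[OF cK] by (simp add: borel_closed)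
  define I where "I = (\<integral>\<^sup>+z. ennreal (P (norm z)) \<partial>(lborel::'a measure))"
  have If: "I < \<infinity>"
  proof -
    have "I = (\<integral>\<^sup>+r. ennreal (rho DIM('a) (measure lborel (ball (0::'a) 1)) r) * ennreal (P r) \<partial>lborel)"
      unfolding I_def by (rule polar_nn) measurable
    also have "\<dots> < \<infinity>" unfolding P_def n_def
      by (rule radial_finite[OF Y]) (use L0 M0 al Ll Lu in auto)
    finally show ?thesis .
  qed
  define H where "H = (\<lambda>x y. (indicator K x + indicator K y) * ennreal (P (norm (x - y))) :: ennreal)"
  have Hm[measurable]: "(\<lambda>(x, y). H x y) \<in> borel_measurable (lborel \<Otimes>\<^sub>M lborel)" unfolding H_def by measurable
  have shift: "(\<integral>\<^sup>+y. ennreal (P (norm (x - y))) \<partial>lborel) = I" for x :: 'a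
  proof -
    have "(\<integral>\<^sup>+y. ennreal (P (norm (x - y))) \<partial>lborel) = (\<integral>\<^sup>+y. ennreal (P (norm (y - x))) \<partial>lborel)"
      by (simp add: norm_minus_commute)
    also have "\<dots> = I" unfolding I_def by (rule nn_integral_shift[of "\<lambda>z. ennreal (P (norm z))"]) measurable
    finally show ?thesis .
  qed
  have shift2: "(\<integral>\<^sup>+x. ennreal (P (norm (x - y))) \<partial>lborel) = I" for y :: 'a
    unfolding I_def by (rule nn_integral_shift[of "\<lambda>z. ennreal (P (norm z))"]) measurable
  have HI: "(\<integral>\<^sup>+x. \<integral>\<^sup>+y. H x y \<partial>lborel \<partial>lborel) = emeasure lborel K * I + emeasure lborel K * I"
  proof -
    have "(\<integral>\<^sup>+x. \<integral>\<^sup>+y. H x y \<partial>lborel \<partial>lborel)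
       = (\<integral>\<^sup>+x. indicator K x * I + (\<integral>\<^sup>+y. indicator K y * ennreal (P (norm (x - y))) \<partial>lborel) \<partial>lborel)"
    proof (rule nn_integral_cong)
      fix x :: 'a
      have "(\<integral>\<^sup>+y. H x y \<partial>lborel) = (\<integral>\<^sup>+y. indicator K x * ennreal (P (norm (x - y)))
           + indicator K y * ennreal (P (norm (x - y))) \<partial>lborel)"
        unfolding H_def by (simp add: distrib_right)
      also have "\<dots> = (\<integral>\<^sup>+y. indicator K x * ennreal (P (norm (x - y))) \<partial>lborel)
           + (\<integral>\<^sup>+y. indicator K y * ennreal (P (norm (x - y))) \<partial>lborel)"
        by (rule nn_integral_add) measurable
      also have "(\<integral>\<^sup>+y. indicator K x * ennreal (P (norm (x - y))) \<partial>lborel) = indicator K x * I"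
        by (subst nn_integral_cmult) (measurable, simp add: shift)
      finally show "(\<integral>\<^sup>+y. H x y \<partial>lborel) = indicator K x * I + (\<integral>\<^sup>+y. indicator K y * ennreal (P (norm (x - y))) \<partial>lborel)" .
    qed
    also have "\<dots> = (\<integral>\<^sup>+x. indicator K x * I \<partial>lborel) + (\<integral>\<^sup>+x. \<integral>\<^sup>+y. indicator K y * ennreal (P (norm (x - y))) \<partial>lborel \<partial>lborel)"
      by (rule nn_integral_add) measurable
    also have "(\<integral>\<^sup>+x. indicator K x * I \<partial>lborel) = emeasure lborel K * I"
      by (subst nn_integral_multc) auto
    also have "(\<integral>\<^sup>+x. \<integral>\<^sup>+y. indicator K y * ennreal (P (norm (x - y))) \<partial>lborel \<partial>lborel)
        = (\<integral>\<^sup>+y. \<integral>\<^sup>+x. indicator K y * ennreal (P (norm (x - y))) \<partial>lborel \<partial>lborel)"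
      by (rule lborel_pair.Fubini'[symmetric]) measurable
    also have "\<dots> = (\<integral>\<^sup>+y. indicator K y * I \<partial>lborel)"
      by (rule nn_integral_cong) (subst nn_integral_cmult, measurable, simp add: shift2)
    also have "\<dots> = emeasure lborel K * I"
      by (subst nn_integral_multc) auto
    finally show ?thesis .
  qed
  have fin: "(\<integral>\<^sup>+x. \<integral>\<^sup>+y. H x y \<partial>lborel \<partial>lborel) < \<infinity>"
    unfolding HI using If emeasure_compact_finite[OF cK] by (simp add: ennreal_mult_less_top)
  have pt: "ennreal (\<phi> (\<bar>u x - u y\<bar> / (s * dist x y powr \<alpha>)) / dist x y ^ (2 * DIM('a))) \<le> ennreal (1 / s) * H x y"
    if x: "x \<in> \<Omega>" and y: "y \<in> \<Omega>" and s: "1 \<le> s" for x y s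
  proof (cases "x \<notin> K \<and> y \<notin> K")
    case True
    then have "u x = 0" "u y = 0" using uK x y by auto
    then show ?thesis using young_props(3)[OF Y] by simp
  next
    case False
    then have one: "1 \<le> (indicator K x + indicator K y :: ennreal)" by (auto simp: indicator_def)
    have "\<phi> (\<bar>u x - u y\<bar> / (s * dist x y powr \<alpha>)) / dist x y ^ (2 * DIM('a)) \<le> (1 / s) * P (dist x y)"
      unfolding P_def n_def
    proof (rule pt_bound[OF Y al s L0 M0 lip[OF x y] bnd[OF x] bnd[OF y]])
      show "bounded \<Omega> \<Longrightarrow> dist x y \<le> diameter \<Omega>" using diameter_bounded_bound x y by blast
    qed simp
    then have "ennreal (\<phi> (\<bar>u x - u y\<bar> / (s * dist x y powr \<alpha>)) / dist x y ^ (2 * DIM('a)))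
        \<le> ennreal (1 / s) * ennreal (P (dist x y))"
    proof -
      have "0 \<le> P (dist x y)" unfolding P_def by (rule prof_nonneg[OF Y])
      then have "ennreal (1 / s) * ennreal (P (dist x y)) = ennreal ((1 / s) * P (dist x y))"
        using s by (intro ennreal_mult[symmetric]) auto
      then show ?thesis using \<open>\<phi> (\<bar>u x - u y\<bar> / (s * dist x y powr \<alpha>)) / dist x y ^ (2 * DIM('a)) \<le> (1 / s) * P (dist x y)\<close>
        by (simp add: ennreal_leI)
    qed
    also have "\<dots> \<le> ennreal (1 / s) * H x y" unfolding H_def dist_norm
      using one by (intro mult_left_mono) (use mult_right_mono[OF one, of "ennreal (P (norm (x - y)))"] in auto)
    finally show ?thesis .
  qed
  have modle: "besov_modular \<alpha> \<phi> \<Omega> u s \<le> ennreal (1 / s) * (\<integral>\<^sup>+x. \<integral>\<^sup>+y. H x y \<partial>lborel \<partial>lborel)"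
    if s: "1 \<le> s" for s
  proof -
    have "besov_modular \<alpha> \<phi> \<Omega> u s \<le> (\<integral>\<^sup>+x. \<integral>\<^sup>+y. ennreal (1 / s) * H x y \<partial>lborel \<partial>lebesgue)"
      unfolding besov_modular_def
    proof (rule nn_integral_mono)
      fix x :: 'a
      show "(\<integral>\<^sup>+y\<in>\<Omega>. ennreal (\<phi> (\<bar>u x - u y\<bar> / (s * dist x y powr \<alpha>)) / dist x y ^ (2 * DIM('a))) \<partial>lebesgue) * indicator \<Omega> x
          \<le> (\<integral>\<^sup>+y. ennreal (1 / s) * H x y \<partial>lborel)"
      proof (cases "x \<in> \<Omega>")
        case True
        have "(\<integral>\<^sup>+y\<in>\<Omega>. ennreal (\<phi> (\<bar>u x - u y\<bar> / (s * dist x y powr \<alpha>)) / dist x y ^ (2 * DIM('a))) \<partial>lebesgue)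
            = (\<integral>\<^sup>+y\<in>\<Omega>. ennreal (\<phi> (\<bar>u x - u y\<bar> / (s * dist x y powr \<alpha>)) / dist x y ^ (2 * DIM('a))) \<partial>lborel)"
          by (rule nn_integral_completion)
        also have "\<dots> \<le> (\<integral>\<^sup>+y. ennreal (1 / s) * H x y \<partial>lborel)"
          by (rule nn_integral_mono) (use pt[OF True _ s] in \<open>auto simp: indicator_def\<close>)
        finally show ?thesis using True by simp
      qed simp
    qed
    also have "\<dots> = (\<integral>\<^sup>+x. \<integral>\<^sup>+y. ennreal (1 / s) * H x y \<partial>lborel \<partial>lborel)"
      by (rule nn_integral_completion)
    also have "\<dots> = (\<integral>\<^sup>+x. ennreal (1 / s) * (\<integral>\<^sup>+y. H x y \<partial>lborel) \<partial>lborel)"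
      by (rule nn_integral_cong) (rule nn_integral_cmult, measurable)
    also have "\<dots> = ennreal (1 / s) * (\<integral>\<^sup>+x. \<integral>\<^sup>+y. H x y \<partial>lborel \<partial>lborel)"
      by (rule nn_integral_cmult) measurable
    finally show ?thesis .
  qed
  define B where "B = enn2real (\<integral>\<^sup>+x. \<integral>\<^sup>+y. H x y \<partial>lborel \<partial>lborel)"
  have B: "(\<integral>\<^sup>+x. \<integral>\<^sup>+y. H x y \<partial>lborel \<partial>lborel) = ennreal B" "B \<ge> 0"
    using fin unfolding B_def by (auto simp: less_top ennreal_enn2real)
  define s where "s = max 1 B"
  have s1: "1 \<le> s" unfolding s_def by simp
  have "besov_modular \<alpha> \<phi> \<Omega> u s \<le> ennreal (1 / s) * ennreal B" using modle[OF s1] B by simp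
  also have "\<dots> = ennreal (B / s)" using B s1 by (simp add: ennreal_mult[symmetric])
  also have "\<dots> \<le> 1" using B s1 by (simp add: s_def)
  finally show ?thesis using s1 by (intro exI[of _ s]) auto
qed


lemma orlicz_part:
  fixes u :: "'a::euclidean_space \<Rightarrow> real"
  assumes Y: "young_function \<phi>" and op: "open \<Omega>" and u: "u \<in> C1c \<Omega>"
  shows "\<exists>s>0. (\<integral>\<^sup>+ x\<in>\<Omega>. ennreal (\<phi> (\<bar>u x\<bar> / s)) \<partial>lebesgue) \<le> 1"
proof -
  define K where "K = closure {x\<in>\<Omega>. u x \<noteq> 0}"
  note ext = c1c_ext[OF u op]
  have cK: "compact K" using ext(1) unfolding K_def by auto
  have uK: "\<And>x. x \<in> \<Omega> \<Longrightarrow> x \<notin> K \<Longrightarrow> u x = 0" using ext(3) unfolding K_def by force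
  obtain M where M0: "M > 0" and Mx: "\<forall>x. \<bar>if x \<in> \<Omega> then u x else 0\<bar> \<le> M"
    using ext(5) by blast
  have bnd: "\<And>x. x \<in> \<Omega> \<Longrightarrow> \<bar>u x\<bar> \<le> M" using Mx by (metis (full_types))
  have Km: "K \<in> sets borel" using compact_imp_closed[OF cK] by (simp add: borel_closed)
  define B where "B = enn2real (emeasure lborel K)"
  have B: "emeasure lborel K = ennreal B" "B \<ge> 0"
    using emeasure_compact_finite[OF cK] unfolding B_def by (auto simp: less_top ennreal_enn2real)
  have pM: "\<phi> M \<ge> 0" using young_nonneg[OF Y] M0 by simp
  define s where "s = max 1 (\<phi> M * B)"
  have s1: "1 \<le> s" unfolding s_def by simp
  have "(\<integral>\<^sup>+ x\<in>\<Omega>. ennreal (\<phi> (\<bar>u x\<bar> / s)) \<partial>lebesgue) = (\<integral>\<^sup>+ x\<in>\<Omega>. ennreal (\<phi> (\<bar>u x\<bar> / s)) \<partial>lborel)"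
    by (rule nn_integral_completion)
  also have "\<dots> \<le> (\<integral>\<^sup>+ x. ennreal (\<phi> M / s) * indicator K x \<partial>lborel)"
  proof (rule nn_integral_mono)
    fix x :: 'a
    show "ennreal (\<phi> (\<bar>u x\<bar> / s)) * indicator \<Omega> x \<le> ennreal (\<phi> M / s) * indicator K x"
    proof (cases "x \<in> \<Omega>")
      case True
      show ?thesis
      proof (cases "x \<in> K")
        case False
        then show ?thesis using True uK young_props(3)[OF Y] by simp
      next
        case xK: True
        have "\<phi> (\<bar>u x\<bar> / s) \<le> \<phi> \<bar>u x\<bar> / s" by (rule young_scale[OF Y s1]) simp
        also have "\<dots> \<le> \<phi> M / s" using young_mono[OF Y _ bnd[OF True]] s1 by (simp add: divide_right_mono)
        finally show ?thesis using True xK by (simp add: ennreal_leI)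
      qed
    qed simp
  qed
  also have "\<dots> = ennreal (\<phi> M / s) * emeasure lborel K"
    by (rule nn_integral_cmult_indicator) (use Km in simp)
  also have "\<dots> = ennreal (\<phi> M * B / s)" using B pM s1 by (simp add: ennreal_mult[symmetric])
  also have "\<dots> \<le> 1" using B pM s1 by (simp add: s_def)
  finally show ?thesis using s1 by (intro exI[of _ s]) auto
qed

theorem lemma2p3:
  fixes \<Omega> :: "(real ^ 'n) set" and \<alpha> :: real and \<phi> :: "real \<Rightarrow> real"
  assumes "CARD('n) \<ge> 2"
    and "open \<Omega>" and "connected \<Omega>" and "\<Omega> \<noteq> {}"
    and "- real CARD('n) < \<alpha>" and "\<alpha> < 0"
    and "young_function \<phi>"
    and "Lambda_lower CARD('n) \<phi> \<alpha> < \<infinity>"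
    and "\<not> bounded \<Omega> \<Longrightarrow> Lambda_upper CARD('n) \<phi> \<alpha> < \<infinity>"
  shows "C1c \<Omega> \<subseteq> besov \<alpha> \<phi> \<Omega> \<and> besov \<alpha> \<phi> \<Omega> \<subseteq> dot_besov \<alpha> \<phi> \<Omega>"
proof
  show "besov \<alpha> \<phi> \<Omega> \<subseteq> dot_besov \<alpha> \<phi> \<Omega>" unfolding besov_def by blast
  show "C1c \<Omega> \<subseteq> besov \<alpha> \<phi> \<Omega>"
  proof
    fix u assume u: "u \<in> C1c \<Omega>"
    have Om: "\<Omega> \<in> sets lebesgue" by (intro sets_completionI_sets) (simp add: assms(2) borel_open)
    have meas: "u \<in> borel_measurable (lebesgue_on \<Omega>)"
      by (rule continuous_imp_measurable_on_sets_lebesgue[OF c1c_ext(6)[OF u assms(2)] Om])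
    from orlicz_part[OF assms(7,2) u] obtain s1 where s1: "s1 > 0" "(\<integral>\<^sup>+ x\<in>\<Omega>. ennreal (\<phi> (\<bar>u x\<bar> / s1)) \<partial>lebesgue) \<le> 1"
      by (elim exE conjE)
    have dim: "DIM(real ^ 'n) = CARD('n)" by simp
    have L1: "Lambda_lower DIM(real ^ 'n) \<phi> \<alpha> < \<infinity>" unfolding dim by (rule assms(8))
    have L2: "\<not> bounded \<Omega> \<Longrightarrow> Lambda_upper DIM(real ^ 'n) \<phi> \<alpha> < \<infinity>" unfolding dim by (rule assms(9))
    have "\<exists>s>0. besov_modular \<alpha> \<phi> \<Omega> u s \<le> 1"
      by (rule besov_part[OF assms(7,6,2) u L1]) (use L2 in blast)
    then obtain s2 where s2: "s2 > 0" "besov_modular \<alpha> \<phi> \<Omega> u s2 \<le> 1"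
      by (elim exE conjE)
    have "orlicz_norm \<phi> \<Omega> u \<le> ereal s1"
      unfolding orlicz_norm_def by (rule INF_lower2[of s1]) (use s1 in auto)
    then have o: "orlicz_norm \<phi> \<Omega> u < \<infinity>" using le_less_trans[of _ "ereal _" \<infinity>] by simp
    have "besov_seminorm \<alpha> \<phi> \<Omega> u \<le> ereal s2"
      unfolding besov_seminorm_def by (rule INF_lower2[of s2]) (use s2 in auto)
    then have b: "besov_seminorm \<alpha> \<phi> \<Omega> u < \<infinity>" using le_less_trans[of _ "ereal _" \<infinity>] by simp
    show "u \<in> besov \<alpha> \<phi> \<Omega>"
      unfolding besov_def orlicz_space_def dot_besov_def using meas o b by auto
  qed
qed


end
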